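(* Let $q$ be a prime power with $q>2$, $m,n\ge1$, and let $\mathscr{C}\subseteq\mathrm{GF}(q^m)^n$ be a scalable code. Let $f:\mathrm{GF}(q^m)^n\times\mathrm{GF}(q^m)^n\to\mathrm{GF}(q^m)$ be a biadditive form and $\tilde f$ the biadditive form on $\mathrm{GF}(q)^{mn}$ induced by $f$. Suppose $\mathrm{Im}_{\mathscr{B}}(\mathscr{C})$ is self-orthogonal w.r.t. $\tilde f$ for three bases $\mathscr{B}_1,\mathscr{B}_2,\mathscr{B}_3$ of $\mathrm{GF}(q^m)$ over $\mathrm{GF}(q)$ whose dual bases are $\mathscr{B}_1'=\{\beta_1,\ldots,\beta_m\}$, $\mathscr{B}_2'=\{\beta_1+\alpha\beta_2,\beta_2,\ldots,\beta_m\}$ and $\mathscr{B}_3'=\{\beta_1+\gamma\beta_2,\beta_2,\ldots,\beta_m\}$, where $\alpha,\gamma$ are distinct nonzero elements of $\mathrm{GF}(q)$. Then $\mathrm{Tr}(\mathscr{C})$ is self-orthogonal w.r.t. $f$ (restricted to $\mathrm{GF}(q)^n\times\mathrm{GF}(q)^n$), and $\mathrm{Im}_{\mathscr{B}}(\mathscr{C})$ is self-orthogonal w.r.t. $\tilde f$ for every basis $\mathscr{B}$ of $\mathrm{GF}(q^m)$ over $\mathrm{GF}(q)$.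
   Context: $\mathrm{Tr}:\mathrm{GF}(q^m)\to\mathrm{GF}(q)$, $\mathrm{Tr}(a)=\sum_{i=0}^{m-1}a^{q^i}$. The dual basis of a basis $\{\gamma_1,\ldots,\gamma_m\}$ of $\mathrm{GF}(q^m)$ over $\mathrm{GF}(q)$ is the unique basis $\{\beta_1,\ldots,\beta_m\}$ with $\mathrm{Tr}(\gamma_i\beta_j)=\delta_{ij}$. A code $\mathscr{C}\subseteq\mathrm{GF}(q^m)^n$ is scalable if $x\in\mathscr{C}\Rightarrow\alpha x\in\mathscr{C}$ for all $\alpha\in\mathrm{GF}(q^m)$. A biadditive form is additive in each argument. For a basis $\mathscr{B}$ with dual basis $\{\beta_1,\ldots,\beta_m\}$, $\mathrm{Im}_{\mathscr{B}}(\mathscr{C})=\{(\mathrm{Tr}(\beta_1x_1),\ldots,\mathrm{Tr}(\beta_1x_n),\ldots,\mathrm{Tr}(\beta_mx_1),\ldots,\mathrm{Tr}(\beta_mx_n)):x\in\mathscr{C}\}\subseteq\mathrm{GF}(q)^{mn}$, and $\mathrm{Tr}(\mathscr{C})=\{(\mathrm{Tr}(x_1),\ldots,\mathrm{Tr}(x_n)):x\in\mathscr{C}\}$. The induced form is $\tilde f(x,y)=\sum_{i=0}^{m-1}f((x_{in+1},\ldots,x_{in+n}),(y_{in+1},\ldots,y_{in+n}))$ for $x,y\in\mathrm{GF}(q)^{mn}$. A code $D$ is self-orthogonal w.r.t. a form $g$ if $g(x,y)=0$ for all $x,y\in D$. *)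

theory Defs
  imports Main "HOL-Computational_Algebra.Primes"
begin

text \<open>The ambient field GF(q^m) is a finite field type 'a with CARD('a) = q^m.
  Vectors in GF(q^m)^n are lists of length n. GF(q) is the subfield {x. x^q = x}.\<close>

definition GFq :: "nat \<Rightarrow> 'a::field set" where
  "GFq q = {x. x ^ q = x}"

definition prime_power :: "nat \<Rightarrow> bool" where
  "prime_power q \<longleftrightarrow> (\<exists>p k. prime p \<and> k \<ge> 1 \<and> q = p ^ k)"

definition Tr :: "nat \<Rightarrow> nat \<Rightarrow> 'a::field \<Rightarrow> 'a" where
  "Tr q m a = (\<Sum>i<m. a ^ (q ^ i))"

definition vadd :: "'a::field list \<Rightarrow> 'a list \<Rightarrow> 'a list" where
  "vadd x y = map2 (+) x y"

definition vecs :: "'a set \<Rightarrow> nat \<Rightarrow> 'a list set" where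
  "vecs K n = {x. length x = n \<and> set x \<subseteq> K}"

definition biadditive :: "nat \<Rightarrow> ('a::field list \<Rightarrow> 'a list \<Rightarrow> 'a) \<Rightarrow> bool" where
  "biadditive n f \<longleftrightarrow>
     (\<forall>x\<in>vecs UNIV n. \<forall>y\<in>vecs UNIV n. \<forall>z\<in>vecs UNIV n.
        f (vadd x y) z = f x z + f y z \<and> f z (vadd x y) = f z x + f z y)"

definition scalable :: "'a::field list set \<Rightarrow> bool" where
  "scalable C \<longleftrightarrow> (\<forall>x\<in>C. \<forall>a. map ((*) a) x \<in> C)"

definition is_basis :: "nat \<Rightarrow> nat \<Rightarrow> 'a::field list \<Rightarrow> bool" where
  "is_basis q m B \<longleftrightarrow> length B = m \<and>
     (\<forall>c. (\<forall>i<m. c i \<in> GFq q) \<and> (\<Sum>i<m. c i * B ! i) = 0 \<longrightarrow> (\<forall>i<m. c i = 0)) \<and>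
     (\<forall>x. \<exists>c. (\<forall>i<m. c i \<in> GFq q) \<and> x = (\<Sum>i<m. c i * B ! i))"

definition is_dual_basis :: "nat \<Rightarrow> nat \<Rightarrow> 'a::field list \<Rightarrow> 'a list \<Rightarrow> bool" where
  "is_dual_basis q m B \<beta> \<longleftrightarrow> is_basis q m \<beta> \<and>
     (\<forall>i<m. \<forall>j<m. Tr q m (B ! i * \<beta> ! j) = (if i = j then 1 else 0))"

definition dual_basis :: "nat \<Rightarrow> nat \<Rightarrow> 'a::field list \<Rightarrow> 'a list" where
  "dual_basis q m B = (THE \<beta>. is_dual_basis q m B \<beta>)"

definition Im :: "nat \<Rightarrow> nat \<Rightarrow> 'a::field list \<Rightarrow> 'a list set \<Rightarrow> 'a list set" where
  "Im q m B C = (\<lambda>x. concat (map (\<lambda>b. map (\<lambda>xi. Tr q m (b * xi)) x) (dual_basis q m B))) ` C"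

definition TrC :: "nat \<Rightarrow> nat \<Rightarrow> 'a::field list set \<Rightarrow> 'a list set" where
  "TrC q m C = (\<lambda>x. map (Tr q m) x) ` C"

definition induced_form :: "nat \<Rightarrow> nat \<Rightarrow> ('a list \<Rightarrow> 'a list \<Rightarrow> 'b::comm_monoid_add)
      \<Rightarrow> 'a list \<Rightarrow> 'a list \<Rightarrow> 'b" where
  "induced_form m n f x y = (\<Sum>i<m. f (take n (drop (i * n) x)) (take n (drop (i * n) y)))"

definition self_orthogonal :: "'a list set \<Rightarrow> ('a list \<Rightarrow> 'a list \<Rightarrow> 'b::zero) \<Rightarrow> bool" where
  "self_orthogonal D g \<longleftrightarrow> (\<forall>x\<in>D. \<forall>y\<in>D. g x y = 0)"

end

theory Submission
  imports Defs "HOL-Computational_Algebra.Polynomial" "HOL-Library.FuncSet"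
begin

hide_const (open) Complex.Im

lemma ff_CHAR_prime: "prime CHAR('a::{field,finite})"
  by (rule prime_CHAR_semidom) (rule finite_imp_CHAR_pos, simp)

lemma ff_power_card: "(x::'a::{field,finite}) ^ card (UNIV :: 'a set) = x"
proof (cases "x = 0")
  case False
  have "x * (\<Prod>y\<in>UNIV-{0}. x * y) = x * x ^ (card (UNIV :: 'a set) - 1) * \<Prod>(UNIV-{0})"
    by (simp add: prod.distrib mult_ac)
  also have "x * x ^ (card (UNIV :: 'a set) - 1) = x ^ Suc (card (UNIV :: 'a set) - 1)"
    by (subst power_Suc) auto
  also have "Suc (card (UNIV :: 'a set) - 1) = card (UNIV :: 'a set)"
    using finite_UNIV_card_ge_0[where ?'a = 'a] by simp
  also have "(\<Prod>y\<in>UNIV-{0}. x * y) = (\<Prod>y\<in>UNIV-{0}. y)"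
    by (rule prod.reindex_bij_witness[of _ "\<lambda>y. y / x" "\<lambda>y. x * y"]) (use False in auto)
  finally show ?thesis
    by simp
qed (use finite_UNIV_card_ge_0[where ?'a = 'a] in auto)

lemma ff_power_card_minus1: "(x::'a::{field,finite}) \<noteq> 0 \<Longrightarrow> x ^ (card (UNIV :: 'a set) - 1) = 1"
proof -
  assume "x \<noteq> 0"
  have "x * x ^ (card (UNIV :: 'a set) - 1) = x ^ Suc (card (UNIV :: 'a set) - 1)" by simp
  also have "Suc (card (UNIV :: 'a set) - 1) = card (UNIV :: 'a set)"
    using finite_UNIV_card_ge_0[where ?'a = 'a] by simp
  finally have "x * x ^ (card (UNIV :: 'a set) - 1) = x * 1" using ff_power_card by simp
  thus ?thesis using \<open>x \<noteq> 0\<close> by simp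
qed

lemma ff_power_pow: "(x::'a::{field,finite}) ^ (card (UNIV :: 'a set) ^ n) = x"
  by (induction n) (simp_all add: ff_power_card power_mult)

lemma frob_add: "r = CHAR('a::{field,finite}) ^ l \<Longrightarrow> (x + y :: 'a) ^ r = x ^ r + y ^ r"
  using freshmans_dream'[OF ff_CHAR_prime] by blast

lemma frob_sum: "r = CHAR('a::{field,finite}) ^ l \<Longrightarrow> (sum (f::_\<Rightarrow>'a) A) ^ r = (\<Sum>i\<in>A. f i ^ r)"
  using freshmans_dream_sum'[OF ff_CHAR_prime] by blast

lemma frob_neg: "r = CHAR('a::{field,finite}) ^ l \<Longrightarrow> (- x :: 'a) ^ r = - (x ^ r)"
proof -
  assume r: "r = CHAR('a) ^ l"
  have "(-x + x) ^ r = (-x)^r + x^r" using frob_add[OF r] by blast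
  moreover have "r > 0" using r ff_CHAR_prime[where 'a='a] by (simp add: prime_gt_0_nat)
  ultimately show ?thesis by (simp add: eq_neg_iff_add_eq_0 zero_power)
qed

lemma frob_diff: "r = CHAR('a::{field,finite}) ^ l \<Longrightarrow> (x - y :: 'a) ^ r = x ^ r - y ^ r"
  using frob_add[of r l x "-y"] frob_neg[of r l y] by simp

lemma frob_inj: "r = CHAR('a::{field,finite}) ^ l \<Longrightarrow> (x :: 'a) ^ r = y ^ r \<Longrightarrow> x = y"
  using frob_diff[of r l x y] by simp

lemma CHAR_dvd_card: "CHAR('a::{field,finite}) dvd card (UNIV::'a set)"
proof -
  have "of_nat (card (UNIV::'a set)) = (0::'a)"
  proof -
    have "(\<Sum>y\<in>(UNIV::'a set). 1 + y) = (\<Sum>y\<in>UNIV. y)"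
      by (rule sum.reindex_bij_witness[of _ "\<lambda>y. y - 1" "\<lambda>y. 1 + y"]) auto
    thus ?thesis by (simp add: sum.distrib)
  qed
  thus ?thesis by (simp add: of_nat_eq_0_iff_char_dvd)
qed

lemma q_is_CHAR_pow:
  assumes "prime_power q" "card (UNIV::'a::{field,finite} set) = q ^ m" "m \<ge> 1"
  shows "\<exists>k\<ge>1. q = CHAR('a) ^ k"
proof -
  obtain p k where pk: "prime p" "k \<ge> 1" "q = p ^ k" using assms(1) unfolding prime_power_def by blast
  have "CHAR('a) dvd p ^ (k * m)" using CHAR_dvd_card[where 'a='a] assms(2) pk(3) by (simp add: power_mult)
  hence "CHAR('a) dvd p" using ff_CHAR_prime[where 'a='a] prime_dvd_power by blast
  hence "CHAR('a) = p" using ff_CHAR_prime[where 'a='a] pk(1) by (simp add: primes_dvd_imp_eq)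
  thus ?thesis using pk by blast
qed

lemma GFq_pow_iter: "c \<in> GFq q \<Longrightarrow> (c::'a::field) ^ (q ^ i) = c"
  unfolding GFq_def by (induction i) (simp_all add: power_mult)

lemma GFq_0[simp]: "q > 0 \<Longrightarrow> (0::'a::field) \<in> GFq q" unfolding GFq_def by simp
lemma GFq_1[simp]: "(1::'a::field) \<in> GFq q" unfolding GFq_def by simp
lemma GFq_mult: "x \<in> GFq q \<Longrightarrow> y \<in> GFq q \<Longrightarrow> (x * y :: 'a::field) \<in> GFq q"
  unfolding GFq_def by (simp add: power_mult_distrib)
lemma GFq_inverse: "x \<in> GFq q \<Longrightarrow> (inverse x :: 'a::field) \<in> GFq q"
  unfolding GFq_def by (simp add: power_inverse)
lemma GFq_divide: "x \<in> GFq q \<Longrightarrow> y \<in> GFq q \<Longrightarrow> (x / y :: 'a::field) \<in> GFq q"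
  unfolding GFq_def by (simp add: power_divide)

context
  fixes k :: nat and q :: nat
  assumes qk: "q = CHAR('a::{field,finite}) ^ k"
begin
lemma GFq_add: "x \<in> GFq q \<Longrightarrow> y \<in> GFq q \<Longrightarrow> (x + y :: 'a) \<in> GFq q"
  unfolding GFq_def using frob_add[OF qk] by simp
lemma GFq_neg: "x \<in> GFq q \<Longrightarrow> (- x :: 'a) \<in> GFq q"
  unfolding GFq_def using frob_neg[OF qk] by simp
lemma GFq_diff: "x \<in> GFq q \<Longrightarrow> y \<in> GFq q \<Longrightarrow> (x - y :: 'a) \<in> GFq q"
  unfolding GFq_def using frob_diff[OF qk] by simp
lemma GFq_sum: "(\<And>i. i \<in> A \<Longrightarrow> f i \<in> GFq q) \<Longrightarrow> (sum f A :: 'a) \<in> GFq q"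
proof (induction A rule: infinite_finite_induct)
  case (infinite A) then show ?case using qk ff_CHAR_prime[where 'a='a] by (simp add: prime_gt_0_nat)
next
  case empty then show ?case using qk ff_CHAR_prime[where 'a='a] by (simp add: prime_gt_0_nat)
next
  case (insert x F) then show ?case by (simp add: GFq_add)
qed
lemma GFq_powr: "x \<in> GFq q \<Longrightarrow> (x :: 'a) ^ r \<in> GFq q"
proof -
  assume "x \<in> GFq q"
  hence x: "x ^ q = x" unfolding GFq_def by simp
  have "(x ^ r) ^ q = (x ^ q) ^ r" by (simp flip: power_mult add: mult.commute)
  thus ?thesis using x unfolding GFq_def by simp
qed

lemma qpow: "q ^ i = CHAR('a) ^ (k * i)" by (simp add: qk power_mult)
lemma Tr_add: "Tr q M (x + y :: 'a) = Tr q M x + Tr q M y"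
  unfolding Tr_def by (simp add: sum.distrib frob_add[OF qpow])
lemma Tr_neg: "Tr q M (- x :: 'a) = - Tr q M x"
  unfolding Tr_def by (simp add: sum_negf frob_neg[OF qpow])
lemma Tr_diff: "Tr q M (x - y :: 'a) = Tr q M x - Tr q M y"
  unfolding Tr_def by (simp add: sum_subtractf frob_diff[OF qpow])
lemma Tr_0: "Tr q M (0::'a) = 0"
  using Tr_add[where x=0 and y=0 and M=M] by (metis add.right_neutral add_left_cancel)
lemma Tr_sum: "Tr q M (sum f A :: 'a) = (\<Sum>i\<in>A. Tr q M (f i))"
  by (induction A rule: infinite_finite_induct) (simp_all add: Tr_add Tr_0)
lemma Tr_scal: "c \<in> GFq q \<Longrightarrow> Tr q M (c * x :: 'a) = c * Tr q M x"
  unfolding Tr_def by (simp add: power_mult_distrib GFq_pow_iter sum_distrib_left)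
lemma Tr_in_GFq:
  assumes "q ^ M = card (UNIV :: 'a set)"
  shows "Tr q M (x::'a) \<in> GFq q"
proof -
  have "Tr q M x ^ q = (\<Sum>i<M. (x ^ q ^ i) ^ q)"
    unfolding Tr_def by (rule frob_sum[OF qk])
  also have "\<dots> = (\<Sum>i<M. x ^ q ^ Suc i)" by (simp flip: power_mult add: mult.commute)
  also have "\<dots> = (\<Sum>i<M. x ^ q ^ i)"
  proof (cases M)
    case (Suc M')
    have "(\<Sum>i<M. x ^ q ^ Suc i) = (\<Sum>i<M'. x ^ q ^ Suc i) + x ^ q ^ M" using Suc by simp
    also have "x ^ q ^ M = x" using assms ff_power_card by simp
    also have "(\<Sum>i<M'. x ^ q ^ Suc i) + x = (\<Sum>i<M. x ^ q ^ i)"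
      unfolding Suc sum.lessThan_Suc_shift by simp
    finally show ?thesis .
  qed simp
  finally show ?thesis unfolding GFq_def Tr_def by simp
qed
end

lemma card_ge2: "card (UNIV::'a::{field,finite} set) \<ge> 2"
proof -
  have "{0,1::'a} \<subseteq> UNIV" by simp
  hence "card {0,1::'a} \<le> card (UNIV::'a set)" by (intro card_mono) auto
  thus ?thesis by simp
qed

lemma psum0:
  assumes "0 < t" "t < card (UNIV::'a::{field,finite} set) - 1"
  shows "(\<Sum>c\<in>(UNIV::'a set). c ^ t) = 0"
proof -
  define P :: "'a poly" where "P = [:-1:] + monom 1 t"
  have degP: "degree P = t" using assms(1) unfolding P_def
    by (subst degree_add_eq_right) (simp_all add: degree_monom_eq)
  have "P \<noteq> 0" using degP assms(1) by auto
  hence "card {x. poly P x = 0} \<le> t" using card_poly_roots_bound degP by metis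
  hence "card {x. poly P x = 0} < card (UNIV - {0::'a})" using assms(2) by (simp add: card_Diff_singleton)
  then obtain d where d: "d \<in> UNIV - {0::'a}" "d \<notin> {x. poly P x = 0}"
  proof -
    assume *: "card {x. poly P x = 0} < card (UNIV - {0::'a})"
      and h: "\<And>d. d \<in> UNIV - {0::'a} \<Longrightarrow> d \<notin> {x. poly P x = 0} \<Longrightarrow> thesis"
    show thesis
    proof (rule ccontr)
      assume "\<not> thesis"
      hence "UNIV - {0::'a} \<subseteq> {x. poly P x = 0}" using h by blast
      hence "card (UNIV - {0::'a}) \<le> card {x. poly P x = 0}" by (intro card_mono) auto
      thus False using * by simp
    qed
  qed
  hence dt: "d ^ t \<noteq> 1" "d \<noteq> 0" unfolding P_def by (auto simp: poly_monom)
  have "(\<Sum>c\<in>(UNIV::'a set). (d * c) ^ t) = (\<Sum>c\<in>UNIV. c ^ t)"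
    by (rule sum.reindex_bij_witness[of _ "\<lambda>y. y / d" "\<lambda>y. d * y"]) (use dt in auto)
  hence "d ^ t * (\<Sum>c\<in>(UNIV::'a set). c ^ t) = 1 * (\<Sum>c\<in>UNIV. c ^ t)"
    by (simp add: power_mult_distrib sum_distrib_left)
  thus ?thesis using dt(1) by (metis mult_cancel_right)
qed

lemma psum_gen:
  assumes "0 < e" "\<not> (card (UNIV::'a::{field,finite} set) - 1) dvd e"
  shows "(\<Sum>c\<in>(UNIV::'a set). c ^ e) = 0"
proof -
  define Q where "Q = card (UNIV::'a set)"
  have Q2: "Q \<ge> 2" using card_ge2 Q_def by simp
  define t where "t = e mod (Q - 1)"
  have t: "0 < t" "t < Q - 1" using assms Q2 unfolding t_def Q_def
    by (auto simp: mod_eq_0_iff_dvd[symmetric])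
  have "c ^ e = c ^ t" for c :: 'a
  proof (cases "c = 0")
    case True thus ?thesis using t assms by (simp add: power_0_left)
  next
    case False
    have "e = (Q - 1) * (e div (Q - 1)) + t" unfolding t_def by simp
    hence "c ^ e = (c ^ (Q - 1)) ^ (e div (Q - 1)) * c ^ t" by (metis power_add power_mult)
    thus ?thesis using ff_power_card_minus1[OF False] Q_def by simp
  qed
  thus ?thesis using psum0[of t] t Q_def by simp
qed

lemma psum_top: "(\<Sum>c\<in>(UNIV::'a::{field,finite} set). c ^ (card (UNIV::'a set) - 1)) = - 1"
proof -
  have "(\<Sum>c\<in>(UNIV::'a set). c ^ (card (UNIV::'a set) - 1)) = (\<Sum>c\<in>UNIV - {0}. c ^ (card (UNIV::'a set) - 1))"
    using card_ge2[where 'a='a] by (intro sum.mono_neutral_right) auto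
  also have "\<dots> = (\<Sum>c\<in>UNIV - {0::'a}. 1)" by (rule sum.cong[OF refl], rule ff_power_card_minus1, simp)
  also have "\<dots> = of_nat (card (UNIV::'a set)) - 1"
    using card_ge2[where 'a='a] by (simp add: card_Diff_singleton of_nat_diff)
  also have "of_nat (card (UNIV::'a set)) = (0::'a)"
    using CHAR_dvd_card[where 'a='a] of_nat_eq_0_iff_char_dvd by blast
  finally show ?thesis by simp
qed


lemma sum_if_0: "(M::nat) \<ge> 1 \<Longrightarrow> (\<Sum>i<M. if i = 0 then a else (0::'a::comm_monoid_add)) = a"
proof -
  assume "M \<ge> 1"
  hence "0 \<in> {..<M}" by auto
  thus ?thesis by (simp add: sum.delta)
qed

lemma frame:
  fixes u :: "'a::{field,finite}"
  assumes qk: "q = CHAR('a) ^ k" and k: "k \<ge> 1" and QM: "q ^ M = card (UNIV::'a set)" and M: "M \<ge> 1"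
  shows "(\<Sum>c\<in>UNIV. Tr q M (u * c) * c ^ (card (UNIV::'a set) - 2)) = - u"
proof -
  define Q where "Q = card (UNIV::'a set)"
  have c2: "CHAR('a) \<ge> 2" using ff_CHAR_prime[where 'a='a] by (simp add: prime_ge_2_nat)
  have "CHAR('a) \<le> CHAR('a) ^ k" using k c2 by (intro self_le_power) auto
  hence q2: "q \<ge> 2" using c2 qk by simp
  have "(\<Sum>c\<in>UNIV. Tr q M (u * c) * c ^ (Q - 2)) = (\<Sum>c\<in>UNIV. \<Sum>i<M. u ^ (q ^ i) * c ^ (q ^ i + (Q - 2)))"
    by (rule sum.cong[OF refl]) (simp add: Tr_def sum_distrib_right sum_distrib_left power_mult_distrib power_add mult_ac)
  also have "\<dots> = (\<Sum>i<M. u ^ (q ^ i) * (\<Sum>c\<in>UNIV. c ^ (q ^ i + (Q - 2))))"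
    by (subst sum.swap) (simp add: sum_distrib_left)
  also have "\<dots> = (\<Sum>i<M. if i = 0 then - u else 0)"
  proof (rule sum.cong[OF refl])
    fix i assume i: "i \<in> {..<M}"
    show "u ^ (q ^ i) * (\<Sum>c\<in>UNIV. c ^ (q ^ i + (Q - 2))) = (if i = 0 then - u else 0)"
    proof (cases "i = 0")
      case True
      have "Q \<ge> 2" using card_ge2[where 'a='a] Q_def by simp
      hence "1 + (Q - 2) = Q - 1" by simp
      thus ?thesis using True psum_top[where 'a='a] Q_def by simp
    next
      case False
      have "q ^ i < q ^ M" using i q2 by (intro power_strict_increasing) auto
      hence lt: "q ^ i < Q" using QM Q_def by simp
      have gt: "q ^ i > 1" using False q2 by (intro one_less_power) auto
      have e: "q ^ i + (Q - 2) = (Q - 1) + (q ^ i - 1)" using lt gt by simp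
      have "\<not> (Q - 1) dvd (q ^ i + (Q - 2))"
      proof
        assume "(Q - 1) dvd (q ^ i + (Q - 2))"
        hence "(Q - 1) dvd (q ^ i - 1)" unfolding e by (simp add: dvd_add_right_iff)
        moreover have "0 < q ^ i - 1" "q ^ i - 1 < Q - 1" using lt gt by auto
        ultimately show False using nat_dvd_not_less by blast
      qed
      hence "(\<Sum>c\<in>(UNIV::'a set). c ^ (q ^ i + (Q - 2))) = 0"
        using psum_gen[of "q ^ i + (Q - 2)"] gt q2 Q_def by simp
      thus ?thesis using False by simp
    qed
  qed
  also have "\<dots> = - u" using M by (rule sum_if_0)
  finally show ?thesis unfolding Q_def .
qed

locale ffset =
  fixes q m k :: nat and TY :: "'a::{field,finite} itself"
  assumes qk: "q = CHAR('a) ^ k" and k: "k \<ge> 1" and QM: "q ^ m = card (UNIV::'a set)" and m: "m \<ge> 1"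
begin

lemma q_pos: "q > 0" using qk ff_CHAR_prime[where 'a='a] by (simp add: prime_gt_0_nat)

lemma Tr_nondeg: "(\<And>z::'a. Tr q m (z * d) = 0) \<Longrightarrow> d = 0"
proof (rule ccontr)
  assume h: "\<And>z::'a. Tr q m (z * d) = 0" and d: "d \<noteq> 0"
  have tr0: "\<And>c::'a. Tr q m c = 0"
  proof -
    fix c :: 'a
    have "c = (c / d) * d" using d by simp
    thus "Tr q m c = 0" using h[of "c / d"] by metis
  qed
  have "(\<Sum>c\<in>(UNIV::'a set). Tr q m (1 * c) * c ^ (card (UNIV::'a set) - 2)) = 0"
    by (simp add: tr0)
  thus False using frame[OF qk k QM m, of 1] by simp
qed

lemma basis_nondeg:
  assumes B: "is_basis q m B" and h: "\<And>i. i < m \<Longrightarrow> Tr q m (B ! i * d) = (0::'a)"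
  shows "d = 0"
proof (rule Tr_nondeg)
  fix z :: 'a
  obtain c where c: "\<forall>i<m. c i \<in> GFq q" "z = (\<Sum>i<m. c i * B ! i)" using B unfolding is_basis_def by blast
  have "z * d = (\<Sum>i<m. c i * (B ! i * d))"
    unfolding c(2) by (simp add: sum_distrib_right mult.assoc)
  hence "Tr q m (z * d) = (\<Sum>i<m. Tr q m (c i * (B ! i * d)))"
    by (simp add: Tr_sum[OF qk])
  also have "\<dots> = 0" using c(1) h by (simp add: Tr_scal[OF qk])
  finally show "Tr q m (z * d) = 0" .
qed

lemma dual_unique:
  fixes B :: "'a list"
  assumes B: "is_basis q m B" and d1: "is_dual_basis q m B \<beta>1" and d2: "is_dual_basis q m B \<beta>2"
  shows "\<beta>1 = \<beta>2"
proof (rule nth_equalityI)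
  show "length \<beta>1 = length \<beta>2" using d1 d2 unfolding is_dual_basis_def is_basis_def by simp
  fix j assume j: "j < length \<beta>1"
  hence jm: "j < m" using d1 unfolding is_dual_basis_def is_basis_def by simp
  have "\<beta>1 ! j - \<beta>2 ! j = 0"
  proof (rule basis_nondeg[OF B])
    fix i assume i: "i < m"
    show "Tr q m (B ! i * (\<beta>1 ! j - \<beta>2 ! j)) = 0"
      using d1 d2 i jm unfolding is_dual_basis_def by (simp add: right_diff_distrib Tr_diff[OF qk])
  qed
  thus "\<beta>1 ! j = \<beta>2 ! j" by simp
qed

lemma dual_exists:
  fixes B :: "'a list"
  assumes B: "is_basis q m B"
  shows "\<exists>\<beta>. is_dual_basis q m B \<beta>"
proof -
  define S where "S = (GFq q :: 'a set)"
  define P where "P = (PiE {..<m} (\<lambda>_. S))"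
  define Psi where "Psi = (\<lambda>c. \<Sum>i<m. c i * B ! i)"
  have lenB: "length B = m" using B unfolding is_basis_def by simp
  have Bind: "\<And>c. (\<forall>i<m. c i \<in> GFq q) \<Longrightarrow> (\<Sum>i<m. c i * B ! i) = 0 \<Longrightarrow> \<forall>i<m. c i = 0"
    using B unfolding is_basis_def by simp
  have Bspan: "\<And>x. \<exists>c. (\<forall>i<m. c i \<in> GFq q) \<and> x = (\<Sum>i<m. c i * B ! i)"
    using B unfolding is_basis_def by simp
  have "bij_betw Psi P UNIV"
  proof (rule bij_betwI')
    fix c c' assume c: "c \<in> P" and c': "c' \<in> P"
    show "(Psi c = Psi c') = (c = c')"
    proof
      assume eq: "Psi c = Psi c'"
      have "(\<Sum>i<m. (c i - c' i) * B ! i) = 0"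
        using eq unfolding Psi_def by (simp add: left_diff_distrib sum_subtractf)
      moreover have "\<forall>i<m. c i - c' i \<in> GFq q" using c c' unfolding P_def S_def
        by (auto intro!: GFq_diff[OF qk])
      ultimately have "\<forall>i<m. c i - c' i = 0" by (rule Bind[rotated])
      thus "c = c'" using c c' unfolding P_def by (intro PiE_ext) auto
    qed simp
  next
    fix x :: 'a
    obtain c where c: "\<forall>i<m. c i \<in> GFq q" "x = (\<Sum>i<m. c i * B ! i)" using Bspan by blast
    show "\<exists>c\<in>P. x = Psi c"
      by (rule bexI[of _ "restrict c {..<m}"]) (use c in \<open>auto simp: P_def S_def Psi_def\<close>)
  qed simp
  hence cardP: "card P = card (UNIV::'a set)" by (rule bij_betw_same_card)
  define Phi where "Phi = (\<lambda>z::'a. restrict (\<lambda>i. Tr q m (B ! i * z)) {..<m})"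
  have PhiP: "Phi z \<in> P" for z unfolding Phi_def P_def S_def using Tr_in_GFq[OF qk QM] by auto
  have inj: "inj Phi"
  proof (rule injI)
    fix z z' assume "Phi z = Phi z'"
    have hz: "\<forall>i<m. Tr q m (B ! i * z) = Tr q m (B ! i * z')"
      using \<open>Phi z = Phi z'\<close>
    proof (intro allI impI)
      fix i assume "Phi z = Phi z'" "i < m"
      hence "Phi z i = Phi z' i" by simp
      thus "Tr q m (B ! i * z) = Tr q m (B ! i * z')" using \<open>i < m\<close> unfolding Phi_def by simp
    qed
    have "z - z' = 0" by (rule basis_nondeg[OF B]) (use hz in \<open>simp add: right_diff_distrib Tr_diff[OF qk]\<close>)
    thus "z = z'" by simp
  qed
  have finP: "finite P" unfolding P_def by (intro finite_PiE) auto
  have "Phi ` UNIV = P"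
  proof (rule card_subset_eq[OF finP])
    show "Phi ` UNIV \<subseteq> P" using PhiP by auto
    show "card (Phi ` UNIV) = card P" using cardP card_image[OF inj] by simp
  qed
  define delta where "delta = (\<lambda>j. restrict (\<lambda>i. if i = j then 1 else (0::'a)) {..<m})"
  have "delta j \<in> P" for j unfolding delta_def P_def S_def using q_pos by auto
  hence ex: "\<exists>z. Phi z = delta j" for j
  proof -
    have "delta j \<in> Phi ` UNIV" using \<open>Phi ` UNIV = P\<close> \<open>delta j \<in> P\<close> by simp
    thus ?thesis by auto
  qed
  define zf where "zf = (\<lambda>j. SOME z. Phi z = delta j)"
  have zf: "\<And>j. Phi (zf j) = delta j" unfolding zf_def using ex by (rule someI_ex)
  define \<beta> where "\<beta> = map zf [0..<m]"
  have len: "length \<beta> = m" unfolding \<beta>_def by simp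
  have trd: "Tr q m (B ! i * \<beta> ! j) = (if i = j then 1 else 0)" if "i < m" "j < m" for i j
  proof -
    have "Phi (zf j) i = delta j i" using zf by simp
    thus ?thesis using that unfolding Phi_def delta_def \<beta>_def by simp
  qed
  have indep: "\<forall>i<m. c i = 0" if c: "\<forall>i<m. c i \<in> GFq q" "(\<Sum>j<m. c j * \<beta> ! j) = 0" for c
  proof (intro allI impI)
    fix i assume i: "i < m"
    have "0 = Tr q m (B ! i * (\<Sum>j<m. c j * \<beta> ! j))" using c(2) Tr_0[OF qk] by simp
    also have "\<dots> = (\<Sum>j<m. c j * Tr q m (B ! i * \<beta> ! j))"
      by (simp add: sum_distrib_left Tr_sum[OF qk] mult.left_commute Tr_scal[OF qk] c(1))
    also have "\<dots> = (\<Sum>j<m. if j = i then c i else 0)"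
      by (rule sum.cong[OF refl]) (use i trd in auto)
    also have "\<dots> = c i" using i by simp
    finally show "c i = 0" by simp
  qed
  have span: "\<exists>c. (\<forall>i<m. c i \<in> GFq q) \<and> x = (\<Sum>i<m. c i * \<beta> ! i)" for x
  proof (intro exI conjI)
    show "\<forall>i<m. Tr q m (B ! i * x) \<in> GFq q" using Tr_in_GFq[OF qk QM] by auto
    have "x - (\<Sum>j<m. Tr q m (B ! j * x) * \<beta> ! j) = 0"
    proof (rule basis_nondeg[OF B])
      fix i assume i: "i < m"
      have "Tr q m (B ! i * (\<Sum>j<m. Tr q m (B ! j * x) * \<beta> ! j))
          = (\<Sum>j<m. Tr q m (Tr q m (B ! j * x) * (B ! i * \<beta> ! j)))"
        by (simp add: sum_distrib_left Tr_sum[OF qk] mult.left_commute)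
      also have "\<dots> = (\<Sum>j<m. Tr q m (B ! j * x) * Tr q m (B ! i * \<beta> ! j))"
        by (rule sum.cong[OF refl]) (rule Tr_scal[OF qk], rule Tr_in_GFq[OF qk QM])
      also have "\<dots> = (\<Sum>j<m. if j = i then Tr q m (B ! i * x) else 0)"
        by (rule sum.cong[OF refl]) (use i trd in auto)
      also have "\<dots> = Tr q m (B ! i * x)" using i by simp
      finally show "Tr q m (B ! i * (x - (\<Sum>j<m. Tr q m (B ! j * x) * \<beta> ! j))) = 0"
        by (simp add: right_diff_distrib Tr_diff[OF qk])
    qed
    thus "x = (\<Sum>i<m. Tr q m (B ! i * x) * \<beta> ! i)" by simp
  qed
  have b1: "is_basis q m \<beta>" unfolding is_basis_def
  proof (intro conjI)
    show "length \<beta> = m" by (rule len)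
    show "\<forall>c. (\<forall>i<m. c i \<in> GFq q) \<and> (\<Sum>i<m. c i * \<beta> ! i) = 0 \<longrightarrow> (\<forall>i<m. c i = 0)"
      using indep by blast
    show "\<forall>x. \<exists>c. (\<forall>i<m. c i \<in> GFq q) \<and> x = (\<Sum>i<m. c i * \<beta> ! i)" using span by blast
  qed
  have "is_dual_basis q m B \<beta>" unfolding is_dual_basis_def using b1 trd by blast
  thus ?thesis by blast
qed

lemma dual_basis_eq:
  fixes B :: "'a list"
  assumes B: "is_basis q m B" and d: "is_dual_basis q m B \<beta>"
  shows "dual_basis q m B = \<beta>"
  unfolding dual_basis_def by (rule the_equality) (use d dual_unique[OF B] in auto)

lemma dual_basis_prop:
  fixes B :: "'a list"
  assumes B: "is_basis q m B"
  shows "is_dual_basis q m B (dual_basis q m B)"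
  using dual_exists[OF B] dual_basis_eq[OF B] by metis

end


lemma of_nat_pow_CHAR: "(of_nat n :: 'a::{field,finite}) ^ CHAR('a) = of_nat n"
proof (induction n)
  case 0 thus ?case using ff_CHAR_prime[where 'a='a] by (simp add: prime_gt_0_nat power_0_left)
next
  case (Suc n)
  have "(of_nat n + 1 :: 'a) ^ CHAR('a) = of_nat n ^ CHAR('a) + 1 ^ CHAR('a)"
    by (rule frob_add[where l=1]) simp
  thus ?case using Suc by (metis add.commute of_nat_Suc power_one)
qed

lemma prime_subfield_range:
  assumes "(x::'a::{field,finite}) ^ CHAR('a) = x"
  shows "x \<in> range of_nat"
proof -
  define p where "p = CHAR('a)"
  have p2: "p \<ge> 2" unfolding p_def using ff_CHAR_prime[where 'a='a] by (simp add: prime_ge_2_nat)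
  define R where "R = {x::'a. x ^ p = x}"
  have sub: "of_nat ` {..<p} \<subseteq> R" unfolding R_def p_def using of_nat_pow_CHAR by auto
  have inj: "inj_on (of_nat :: nat \<Rightarrow> 'a) {..<p}"
  proof (rule inj_onI)
    fix i j assume i: "i \<in> {..<p}" and j: "j \<in> {..<p}" and eq: "(of_nat i :: 'a) = of_nat j"
    show "i = j"
    proof (rule ccontr)
      assume "i \<noteq> j"
      then consider "i < j" | "j < i" by linarith
      thus False
      proof cases
        case 1
        have "(of_nat (j - i) :: 'a) = 0" using eq 1 by (simp add: of_nat_diff)
        hence "p dvd (j - i)" unfolding p_def by (simp add: of_nat_eq_0_iff_char_dvd)
        moreover have "0 < j - i" "j - i < p" using 1 j by auto
        ultimately show False using nat_dvd_not_less by blast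
      next
        case 2
        have "(of_nat (i - j) :: 'a) = 0" using eq 2 by (simp add: of_nat_diff)
        hence "p dvd (i - j)" unfolding p_def by (simp add: of_nat_eq_0_iff_char_dvd)
        moreover have "0 < i - j" "i - j < p" using 2 i by auto
        ultimately show False using nat_dvd_not_less by blast
      qed
    qed
  qed
  have c1: "card (of_nat ` {..<p} :: 'a set) = p" using card_image[OF inj] by simp
  define P :: "'a poly" where "P = [:0, -1:] + monom 1 p"
  have degP: "degree P = p" unfolding P_def using p2
    by (subst degree_add_eq_right) (simp_all add: degree_monom_eq)
  have "P \<noteq> 0" using degP p2 by auto
  hence "card {x. poly P x = 0} \<le> p" using card_poly_roots_bound degP by metis
  moreover have "{x. poly P x = 0} = R" unfolding P_def R_def by (auto simp: poly_monom)
  ultimately have "card R \<le> p" by simp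
  moreover have "card (of_nat ` {..<p} :: 'a set) \<le> card R" by (rule card_mono[OF _ sub]) simp
  ultimately have "card (of_nat ` {..<p} :: 'a set) = card R" using c1 by simp
  hence "of_nat ` {..<p} = R" using sub by (intro card_subset_eq) auto
  thus ?thesis using assms unfolding R_def p_def by auto
qed

lemma additive_of_nat:
  fixes phi :: "'a::field \<Rightarrow> 'a"
  assumes add: "\<And>x y. phi (x + y) = phi x + (phi y ::'a)"
  shows "phi (of_nat n * x) = of_nat n * phi x"
proof -
  have z: "phi 0 = 0" using add[of 0 0] by (metis add_cancel_right_right add_0)
  show ?thesis by (induction n) (simp_all add: z add distrib_right)
qed

lemma additive_neg:
  fixes phi :: "'a::field \<Rightarrow> 'a"
  assumes add: "\<And>x y. phi (x + y) = phi x + (phi y ::'a)"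
  shows "phi (- x) = - phi x"
proof -
  have z: "phi 0 = 0" using add[of 0 0] by (metis add_cancel_right_right add_0)
  have "phi (- x + x) = phi (- x) + phi x" by (rule add)
  thus ?thesis using z by (simp add: eq_neg_iff_add_eq_0)
qed

lemma additive_sum:
  fixes phi :: "'a::field \<Rightarrow> 'a"
  assumes add: "\<And>x y. phi (x + y) = phi x + (phi y ::'a)"
  shows "phi (sum f A) = (\<Sum>a\<in>A. phi (f a))"
proof -
  have z: "phi 0 = 0" using add[of 0 0] by (metis add_cancel_right_right add_0)
  show ?thesis by (induction A rule: infinite_finite_induct) (simp_all add: z add)
qed


lemma sum4_swap:
  "(\<Sum>c\<in>A. \<Sum>d\<in>B. \<Sum>i\<in>I. \<Sum>j\<in>J. (F c d i j :: 'a::comm_monoid_add)) = (\<Sum>i\<in>I. \<Sum>j\<in>J. \<Sum>c\<in>A. \<Sum>d\<in>B. F c d i j)"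
proof -
  have "(\<Sum>c\<in>A. \<Sum>d\<in>B. \<Sum>i\<in>I. \<Sum>j\<in>J. F c d i j) = (\<Sum>c\<in>A. \<Sum>i\<in>I. \<Sum>d\<in>B. \<Sum>j\<in>J. F c d i j)"
    by (rule sum.cong[OF refl], rule sum.swap)
  also have "\<dots> = (\<Sum>c\<in>A. \<Sum>i\<in>I. \<Sum>j\<in>J. \<Sum>d\<in>B. F c d i j)"
    by (rule sum.cong[OF refl], rule sum.cong[OF refl], rule sum.swap)
  also have "\<dots> = (\<Sum>i\<in>I. \<Sum>c\<in>A. \<Sum>j\<in>J. \<Sum>d\<in>B. F c d i j)"
    by (rule sum.swap)
  also have "\<dots> = (\<Sum>i\<in>I. \<Sum>j\<in>J. \<Sum>c\<in>A. \<Sum>d\<in>B. F c d i j)"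
    by (rule sum.cong[OF refl], rule sum.swap)
  finally show ?thesis .
qed

locale ffp =
  fixes N :: nat and TY :: "'a::{field,finite} itself"
  assumes PN: "CHAR('a) ^ N = card (UNIV::'a set)" and N: "N \<ge> 1"
begin


lemma TrP_range: "Tr CHAR('a) N (w::'a) \<in> range of_nat"
proof (rule prime_subfield_range)
  have "Tr CHAR('a) N w \<in> GFq CHAR('a)" by (rule Tr_in_GFq[where k=1]) (use PN in auto)
  thus "Tr CHAR('a) N w ^ CHAR('a) = Tr CHAR('a) N w" unfolding GFq_def by simp
qed

lemma additive_expand:
  fixes phi :: "'a \<Rightarrow> 'a"
  assumes add: "\<And>x y. phi (x + y) = phi x + phi y"
  shows "phi u = - (\<Sum>c\<in>UNIV. Tr CHAR('a) N (u * c) * phi (c ^ (card (UNIV::'a set) - 2)))"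
proof -
  have fr: "(\<Sum>c\<in>UNIV. Tr CHAR('a) N (u * c) * c ^ (card (UNIV::'a set) - 2)) = - u"
    by (rule frame[where k=1]) (use PN N in auto)
  have "phi u = phi (- (\<Sum>c\<in>UNIV. Tr CHAR('a) N (u * c) * c ^ (card (UNIV::'a set) - 2)))" using fr by simp
  also have "\<dots> = - (\<Sum>c\<in>UNIV. phi (Tr CHAR('a) N (u * c) * c ^ (card (UNIV::'a set) - 2)))"
    by (simp add: additive_neg[OF add] additive_sum[OF add])
  also have "\<dots> = - (\<Sum>c\<in>UNIV. Tr CHAR('a) N (u * c) * phi (c ^ (card (UNIV::'a set) - 2)))"
  proof -
    have "phi (Tr CHAR('a) N (u * c) * c ^ (card (UNIV::'a set) - 2)) = Tr CHAR('a) N (u * c) * phi (c ^ (card (UNIV::'a set) - 2))" for c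
    proof -
      obtain n where n: "Tr CHAR('a) N (u * c) = of_nat n" using TrP_range by blast
      show ?thesis unfolding n by (rule additive_of_nat[OF add])
    qed
    thus ?thesis by simp
  qed
  finally show ?thesis .
qed

lemma Tr_expand: "Tr CHAR('a) N (u * c :: 'a) = (\<Sum>i<N. u ^ (CHAR('a) ^ i) * c ^ (CHAR('a) ^ i))"
  unfolding Tr_def by (simp add: power_mult_distrib)

lemma biadd_rep:
  fixes G :: "'a \<Rightarrow> 'a \<Rightarrow> 'a"
  assumes add1: "\<And>x y v. G (x + y) v = G x v + G y v"
    and add2: "\<And>u x y. G u (x + y) = G u x + G u y"
  shows "\<exists>g. \<forall>u v. G u v = (\<Sum>i<N. \<Sum>j<N. g i j * u ^ (CHAR('a) ^ i) * v ^ (CHAR('a) ^ j))"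
proof -
  define g where "g = (\<lambda>i j. \<Sum>c\<in>(UNIV::'a set). \<Sum>d\<in>(UNIV::'a set).
        c ^ (CHAR('a) ^ i) * d ^ (CHAR('a) ^ j) * G (c ^ (card (UNIV::'a set) - 2)) (d ^ (card (UNIV::'a set) - 2)))"
  have "G u v = (\<Sum>i<N. \<Sum>j<N. g i j * u ^ (CHAR('a) ^ i) * v ^ (CHAR('a) ^ j))" for u v
  proof -
    have "G u v = - (\<Sum>c\<in>UNIV. Tr CHAR('a) N (u * c) * G (c ^ (card (UNIV::'a set) - 2)) v)"
      by (rule additive_expand[where phi="\<lambda>x. G x v"]) (rule add1)
    also have "\<dots> = - (\<Sum>c\<in>UNIV. Tr CHAR('a) N (u * c) * - (\<Sum>d\<in>UNIV. Tr CHAR('a) N (v * d) * G (c ^ (card (UNIV::'a set) - 2)) (d ^ (card (UNIV::'a set) - 2))))"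
    proof -
      have "G (c ^ (card (UNIV::'a set) - 2)) v = - (\<Sum>d\<in>UNIV. Tr CHAR('a) N (v * d) * G (c ^ (card (UNIV::'a set) - 2)) (d ^ (card (UNIV::'a set) - 2)))" for c
        by (rule additive_expand[where phi="\<lambda>y. G (c ^ (card (UNIV::'a set) - 2)) y"]) (rule add2)
      thus ?thesis by simp
    qed
    also have "\<dots> = (\<Sum>c\<in>UNIV. \<Sum>d\<in>UNIV. Tr CHAR('a) N (u * c) * Tr CHAR('a) N (v * d) * G (c ^ (card (UNIV::'a set) - 2)) (d ^ (card (UNIV::'a set) - 2)))"
      by (simp add: sum_distrib_left sum_negf mult.assoc)
    also have "\<dots> = (\<Sum>c\<in>(UNIV::'a set). \<Sum>d\<in>(UNIV::'a set). \<Sum>i<N. \<Sum>j<N.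
        u ^ (CHAR('a) ^ i) * v ^ (CHAR('a) ^ j) * (c ^ (CHAR('a) ^ i) * d ^ (CHAR('a) ^ j) * G (c ^ (card (UNIV::'a set) - 2)) (d ^ (card (UNIV::'a set) - 2))))"
      unfolding Tr_expand
      apply (simp add: sum_distrib_left sum_distrib_right mult_ac)
      apply (rule sum.cong[OF refl], rule sum.cong[OF refl], rule sum.swap)
      done
    also have "\<dots> = (\<Sum>i<N. \<Sum>j<N. \<Sum>c\<in>(UNIV::'a set). \<Sum>d\<in>(UNIV::'a set).
        u ^ (CHAR('a) ^ i) * v ^ (CHAR('a) ^ j) * (c ^ (CHAR('a) ^ i) * d ^ (CHAR('a) ^ j) * G (c ^ (card (UNIV::'a set) - 2)) (d ^ (card (UNIV::'a set) - 2))))"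
      by (rule sum4_swap)
    also have "\<dots> = (\<Sum>i<N. \<Sum>j<N. g i j * u ^ (CHAR('a) ^ i) * v ^ (CHAR('a) ^ j))"
      unfolding g_def by (simp add: sum_distrib_left mult_ac)
    finally show ?thesis .
  qed
  thus ?thesis by blast
qed

end


lemma two_alpha:
  fixes \<alpha> \<gamma> s :: "'a::{field,finite}"
  assumes qk: "q = CHAR('a) ^ k"
    and a: "\<alpha> \<in> GFq q" "\<alpha> \<noteq> 0" and g: "\<gamma> \<in> GFq q" "\<gamma> \<noteq> 0" and ag: "\<alpha> \<noteq> \<gamma>"
    and s: "s \<notin> GFq q"
    and e1: "(1 + \<alpha> * s) ^ (CHAR('a) ^ i + CHAR('a) ^ j) = 1"
    and e2: "(1 + \<gamma> * s) ^ (CHAR('a) ^ i + CHAR('a) ^ j) = 1"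
  shows False
proof -
  define X where "X = s ^ (CHAR('a) ^ i)"
  define Y where "Y = s ^ (CHAR('a) ^ j)"
  define A where "A = \<alpha> ^ (CHAR('a) ^ i)"
  define A' where "A' = \<alpha> ^ (CHAR('a) ^ j)"
  define C where "C = \<gamma> ^ (CHAR('a) ^ i)"
  define C' where "C' = \<gamma> ^ (CHAR('a) ^ j)"
  have fi: "(1 + z * s) ^ (CHAR('a) ^ i) = 1 + z ^ (CHAR('a) ^ i) * X" for z
    unfolding X_def by (simp add: frob_add[OF refl] power_mult_distrib)
  have fj: "(1 + z * s) ^ (CHAR('a) ^ j) = 1 + z ^ (CHAR('a) ^ j) * Y" for z
    unfolding Y_def by (simp add: frob_add[OF refl] power_mult_distrib)
  have E1: "(1 + A * X) * (1 + A' * Y) = 1" using e1 unfolding power_add fi fj A_def A'_def .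
  have E2: "(1 + C * X) * (1 + C' * Y) = 1" using e2 unfolding power_add fi fj C_def C'_def .
  have GA: "A \<in> GFq q" "A' \<in> GFq q" "C \<in> GFq q" "C' \<in> GFq q"
    unfolding A_def A'_def C_def C'_def using a g by (auto intro: GFq_powr[OF qk])
  have nz: "A \<noteq> 0" "A' \<noteq> 0" "C \<noteq> 0" "C' \<noteq> 0"
    unfolding A_def A'_def C_def C'_def using a g by auto
  have sX: "X \<notin> GFq q"
  proof
    assume "X \<in> GFq q"
    hence "(s ^ q) ^ (CHAR('a) ^ i) = s ^ (CHAR('a) ^ i)"
      unfolding X_def GFq_def by (simp flip: power_mult add: mult.commute)
    hence "s ^ q = s" by (rule frob_inj[OF refl])
    thus False using s unfolding GFq_def by simp
  qed
  have X0: "X \<noteq> 0" using sX qk ff_CHAR_prime[where 'a='a] by (auto simp: prime_gt_0_nat)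
  have e1': "A' * Y * (1 + A * X) = - (A * X)"
  proof -
    have "A' * Y * (1 + A * X) = (1 + A * X) * (1 + A' * Y) - (1 + A * X)" by (simp add: algebra_simps)
    thus ?thesis using E1 by simp
  qed
  have e2': "C' * Y * (1 + C * X) = - (C * X)"
  proof -
    have "C' * Y * (1 + C * X) = (1 + C * X) * (1 + C' * Y) - (1 + C * X)" by (simp add: algebra_simps)
    thus ?thesis using E2 by simp
  qed
  have "A * X * C' * (1 + C * X) = C * X * A' * (1 + A * X)"
  proof -
    have "- (A * X) * (C' * (1 + C * X)) = A' * Y * (1 + A * X) * (C' * (1 + C * X))" using e1' by simp
    also have "\<dots> = C' * Y * (1 + C * X) * (A' * (1 + A * X))" by (simp add: mult_ac)
    also have "\<dots> = - (C * X) * (A' * (1 + A * X))" using e2' by simp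
    finally show ?thesis by (simp add: mult_ac)
  qed
  hence key: "A * C' * (1 + C * X) = C * A' * (1 + A * X)" using X0 by (simp add: mult_ac)
  show False
  proof (cases "A' = C'")
    case True
    hence "\<alpha> = \<gamma>" unfolding A'_def C'_def by (rule frob_inj[OF refl])
    thus False using ag by simp
  next
    case False
    have "A * C' - C * A' = X * (A * C * (A' - C'))" using key by (simp add: algebra_simps)
    hence "X = (A * C' - C * A') / (A * C * (A' - C'))" using False nz by (simp add: field_simps)
    moreover have "(A * C' - C * A') / (A * C * (A' - C')) \<in> GFq q"
      using GA by (intro GFq_divide GFq_diff[OF qk] GFq_mult) auto
    ultimately show False using sX by simp
  qed
qed

context ffp
begin

lemma pow_lt_card: "i < N \<Longrightarrow> CHAR('a) ^ i < card (UNIV::'a set)"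
proof -
  assume "i < N"
  moreover have "CHAR('a) > 1" using prime_gt_1_nat[OF ff_CHAR_prime[where 'a='a]] by simp
  ultimately have "CHAR('a) ^ i < CHAR('a) ^ N" by (intro power_strict_increasing)
  thus ?thesis using PN by simp
qed

lemma lin_unique:
  assumes h: "\<And>u::'a. (\<Sum>i<N. c i * u ^ (CHAR('a) ^ i)) = 0" and i0: "i0 < N"
  shows "c i0 = 0"
proof -
  define Q where "Q = card (UNIV::'a set)"
  define p where "p = CHAR('a)"
  have p1: "p > 1" unfolding p_def using prime_gt_1_nat[OF ff_CHAR_prime[where 'a='a]] by simp
  have lt: "i < N \<Longrightarrow> p ^ i < Q" for i using pow_lt_card unfolding p_def Q_def by simp
  define t where "t = Q - 1 - p ^ i0"
  have "0 = (\<Sum>u\<in>(UNIV::'a set). u ^ t * (\<Sum>i<N. c i * u ^ (p ^ i)))" using h unfolding p_def by simp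
  also have "\<dots> = (\<Sum>u\<in>(UNIV::'a set). \<Sum>i<N. c i * u ^ (t + p ^ i))"
    by (rule sum.cong[OF refl]) (simp add: sum_distrib_left power_add mult_ac)
  also have "\<dots> = (\<Sum>i<N. \<Sum>u\<in>(UNIV::'a set). c i * u ^ (t + p ^ i))"
    by (rule sum.swap)
  also have "\<dots> = (\<Sum>i<N. c i * (\<Sum>u\<in>(UNIV::'a set). u ^ (t + p ^ i)))"
    by (simp add: sum_distrib_left)
  also have "\<dots> = (\<Sum>i<N. if i = i0 then - c i0 else 0)"
  proof (rule sum.cong[OF refl])
    fix i assume i: "i \<in> {..<N}"
    show "c i * (\<Sum>u\<in>(UNIV::'a set). u ^ (t + p ^ i)) = (if i = i0 then - c i0 else 0)"
    proof (cases "i = i0")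
      case True
      have "t + p ^ i = Q - 1" using lt[OF i0] True unfolding t_def by simp
      thus ?thesis using True psum_top[where 'a='a] unfolding Q_def by simp
    next
      case False
      have ne: "p ^ i \<noteq> p ^ i0" using False p1 by (simp add: power_inject_exp)
      have li: "p ^ i < Q" "p ^ i0 < Q" using lt i i0 by auto
      have pos: "p ^ i \<ge> 1" "p ^ i0 \<ge> 1" using p1 by auto
      have e0: "0 < t + p ^ i" using pos by linarith
      have nd: "\<not> (Q - 1) dvd (t + p ^ i)"
      proof
        assume "(Q - 1) dvd (t + p ^ i)"
        then obtain r where r: "t + p ^ i = (Q - 1) * r" by (auto simp: dvd_def)
        have lo: "t + p ^ i < 2 * (Q - 1)" using li pos unfolding t_def by linarith
        have ne2: "t + p ^ i \<noteq> Q - 1" using li pos ne unfolding t_def by linarith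
        consider "r = 0" | "r = 1" | "r \<ge> 2" by linarith
        thus False
        proof cases
          case 1 thus False using r e0 by simp
        next
          case 2 thus False using r ne2 by simp
        next
          case 3
          hence "(Q - 1) * 2 \<le> (Q - 1) * r" by (intro mult_left_mono) auto
          thus False using r lo by linarith
        qed
      qed
      have "(\<Sum>u\<in>(UNIV::'a set). u ^ (t + p ^ i)) = 0"
        by (rule psum_gen) (use e0 nd Q_def in auto)
      thus ?thesis using False by simp
    qed
  qed
  also have "\<dots> = - c i0" using i0 by simp
  finally show ?thesis by simp
qed

lemma bilin_unique:
  assumes h: "\<And>u v::'a. (\<Sum>i<N. \<Sum>j<N. c i j * u ^ (CHAR('a) ^ i) * v ^ (CHAR('a) ^ j)) = 0"
    and i: "i < N" and j: "j < N"
  shows "c i j = 0"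
proof -
  have "(\<Sum>j<N. c i j * v ^ (CHAR('a) ^ j)) = 0" for v :: 'a
  proof (rule lin_unique[OF _ i, where c="\<lambda>i. \<Sum>j<N. c i j * v ^ (CHAR('a) ^ j)"])
    fix u :: 'a
    show "(\<Sum>i<N. (\<Sum>j<N. c i j * v ^ (CHAR('a) ^ j)) * u ^ (CHAR('a) ^ i)) = 0"
      using h[of u v] by (simp add: sum_distrib_left sum_distrib_right mult_ac)
  qed
  thus ?thesis by (rule lin_unique[OF _ j, where c="c i"])
qed

lemma inv_coeff:
  fixes G :: "'a \<Rightarrow> 'a \<Rightarrow> 'a"
  assumes rep: "\<And>u v. G u v = (\<Sum>i<N. \<Sum>j<N. g i j * u ^ (CHAR('a) ^ i) * v ^ (CHAR('a) ^ j))"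
    and inv: "\<And>u v. G (l * u) (l * v) = G u v"
    and i: "i < N" and j: "j < N"
  shows "g i j * (l ^ (CHAR('a) ^ i + CHAR('a) ^ j) - 1) = 0"
proof (rule bilin_unique[OF _ i j, where c="\<lambda>i j. g i j * (l ^ (CHAR('a) ^ i + CHAR('a) ^ j) - 1)"])
  fix u v :: 'a
  have "0 = G (l * u) (l * v) - G u v" using inv by simp
  also have "\<dots> = (\<Sum>i<N. \<Sum>j<N. g i j * (l * u) ^ (CHAR('a) ^ i) * (l * v) ^ (CHAR('a) ^ j))
      - (\<Sum>i<N. \<Sum>j<N. g i j * u ^ (CHAR('a) ^ i) * v ^ (CHAR('a) ^ j))" using rep by simp
  also have "\<dots> = (\<Sum>i<N. \<Sum>j<N. g i j * (l ^ (CHAR('a) ^ i + CHAR('a) ^ j) - 1) * u ^ (CHAR('a) ^ i) * v ^ (CHAR('a) ^ j))"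
    by (simp add: sum_subtractf[symmetric] power_mult_distrib power_add algebra_simps)
  finally show "(\<Sum>i<N. \<Sum>j<N. g i j * (l ^ (CHAR('a) ^ i + CHAR('a) ^ j) - 1) * u ^ (CHAR('a) ^ i) * v ^ (CHAR('a) ^ j)) = 0"
    by simp
qed

lemma core:
  fixes G :: "'a \<Rightarrow> 'a \<Rightarrow> 'a" and \<alpha> \<gamma> s :: 'a
  assumes add1: "\<And>x y v. G (x + y) v = G x v + G y v"
    and add2: "\<And>u x y. G u (x + y) = G u x + G u y"
    and qk: "q = CHAR('a) ^ k"
    and a: "\<alpha> \<in> GFq q" "\<alpha> \<noteq> 0" and g: "\<gamma> \<in> GFq q" "\<gamma> \<noteq> 0" and ag: "\<alpha> \<noteq> \<gamma>"
    and s: "s \<notin> GFq q"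
    and inv1: "\<And>u v. G ((1 + \<alpha> * s) * u) ((1 + \<alpha> * s) * v) = G u v"
    and inv2: "\<And>u v. G ((1 + \<gamma> * s) * u) ((1 + \<gamma> * s) * v) = G u v"
  shows "G u v = 0"
proof -
  obtain g where rep: "\<And>u v. G u v = (\<Sum>i<N. \<Sum>j<N. g i j * u ^ (CHAR('a) ^ i) * v ^ (CHAR('a) ^ j))"
    using biadd_rep[OF add1 add2] by blast
  have "g i j = 0" if i: "i < N" and j: "j < N" for i j
  proof (rule ccontr)
    assume nz: "g i j \<noteq> 0"
    have "g i j * ((1 + \<alpha> * s) ^ (CHAR('a) ^ i + CHAR('a) ^ j) - 1) = 0"
      by (rule inv_coeff[OF rep inv1 i j])
    hence e1: "(1 + \<alpha> * s) ^ (CHAR('a) ^ i + CHAR('a) ^ j) = 1" using nz by simp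
    have "g i j * ((1 + \<gamma> * s) ^ (CHAR('a) ^ i + CHAR('a) ^ j) - 1) = 0"
      by (rule inv_coeff[OF rep inv2 i j])
    hence e2: "(1 + \<gamma> * s) ^ (CHAR('a) ^ i + CHAR('a) ^ j) = 1" using nz by simp
    show False by (rule two_alpha[OF qk a g ag s e1 e2])
  qed
  thus ?thesis using rep[of u v] by simp
qed

end


lemma vadd_map: "vadd (map f x) (map g x) = map (\<lambda>z. f z + g z) x"
  unfolding vadd_def by (induction x) auto

lemma take_drop_concat:
  assumes "\<And>b. length (h b) = n" and "i < length L"
  shows "take n (drop (i * n) (concat (map h L))) = h (L ! i)"
  using assms(2)
proof (induction L arbitrary: i)
  case Nil thus ?case by simp
next
  case (Cons a L)
  show ?case
  proof (cases i)
    case 0 thus ?thesis using assms(1)[of a] by simp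
  next
    case (Suc i')
    have "drop (i * n) (concat (map h (a # L))) = drop (i' * n) (concat (map h L))"
      using Suc assms(1)[of a] by (simp add: add.commute)
    thus ?thesis using Cons Suc by simp
  qed
qed

definition GG :: "nat \<Rightarrow> nat \<Rightarrow> ('a::field list \<Rightarrow> 'a list \<Rightarrow> 'a) \<Rightarrow> 'a list \<Rightarrow> 'a list \<Rightarrow> 'a \<Rightarrow> 'a \<Rightarrow> 'a" where
  "GG q m f x y u v = f (map (\<lambda>xi. Tr q m (u * xi)) x) (map (\<lambda>yi. Tr q m (v * yi)) y)"

definition imv :: "nat \<Rightarrow> nat \<Rightarrow> 'a::field list \<Rightarrow> 'a list \<Rightarrow> 'a list" where
  "imv q m L x = concat (map (\<lambda>b. map (\<lambda>xi. Tr q m (b * xi)) x) L)"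

lemma Im_eq: "Im q m B C = imv q m (dual_basis q m B) ` C"
  unfolding Defs.Im_def imv_def by simp

lemma induced_imv:
  assumes "length L = m" "length x = n" "length y = n"
  shows "induced_form m n f (imv q m L x) (imv q m L y) = (\<Sum>i<m. GG q m f x y (L ! i) (L ! i))"
  unfolding induced_form_def imv_def GG_def
proof (rule sum.cong[OF refl])
  fix i assume "i \<in> {..<m}"
  hence i: "i < length L" using assms by simp
  show "f (take n (drop (i * n) (concat (map (\<lambda>b. map (\<lambda>xi. Tr q m (b * xi)) x) L))))
          (take n (drop (i * n) (concat (map (\<lambda>b. map (\<lambda>xi. Tr q m (b * xi)) y) L)))) =
        f (map (\<lambda>xi. Tr q m (L ! i * xi)) x) (map (\<lambda>yi. Tr q m (L ! i * yi)) y)"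
    using take_drop_concat[of "\<lambda>b. map (\<lambda>xi. Tr q m (b * xi)) x" n i L]
      take_drop_concat[of "\<lambda>b. map (\<lambda>xi. Tr q m (b * xi)) y" n i L] i assms by simp
qed

lemma GG_scale: "GG q m f (map ((*) a) x) (map ((*) b) y) u v = GG q m f x y (u * a) (v * b)"
  unfolding GG_def by (simp add: comp_def mult.assoc)

theorem theorem4:
  fixes q m n :: nat
    and C :: "'a::{field,finite} list set"
    and f :: "'a list \<Rightarrow> 'a list \<Rightarrow> 'a"
    and B1 B2 B3 \<beta> :: "'a list"
    and \<alpha> \<gamma> :: 'a
  assumes "prime_power q" and "q > 2" and "m \<ge> 2" and "n \<ge> 1"
    and "card (UNIV :: 'a set) = q ^ m"
    and "C \<subseteq> vecs UNIV n" and "scalable C"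
    and "biadditive n f"
    and "\<alpha> \<in> GFq q" and "\<gamma> \<in> GFq q" and "\<alpha> \<noteq> 0" and "\<gamma> \<noteq> 0" and "\<alpha> \<noteq> \<gamma>"
    and "is_basis q m B1" and "is_basis q m B2" and "is_basis q m B3"
    and "is_dual_basis q m B1 \<beta>"
    and "is_dual_basis q m B2 (\<beta>[0 := \<beta> ! 0 + \<alpha> * \<beta> ! 1])"
    and "is_dual_basis q m B3 (\<beta>[0 := \<beta> ! 0 + \<gamma> * \<beta> ! 1])"
    and "self_orthogonal (Im q m B1 C) (induced_form m n f)"
    and "self_orthogonal (Im q m B2 C) (induced_form m n f)"
    and "self_orthogonal (Im q m B3 C) (induced_form m n f)"
  shows "self_orthogonal (TrC q m C) f \<and>
         (\<forall>B. is_basis q m B \<longrightarrow> self_orthogonal (Im q m B C) (induced_form m n f))"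
proof -
  have m1: "m \<ge> 1" using assms(3) by simp
  obtain k where k: "k \<ge> 1" "q = CHAR('a) ^ k" using q_is_CHAR_pow[OF assms(1) assms(5) m1] by blast
  interpret F: ffset q m k "TYPE('a)" by unfold_locales (use k assms(5) m1 in auto)
  interpret P: ffp "k * m" "TYPE('a)"
    by unfold_locales (use k assms(5) m1 in \<open>auto simp: power_mult\<close>)
  have qpos: "q > 0" using assms(2) by simp
  have lenx: "\<And>x. x \<in> C \<Longrightarrow> length x = n" using assms(6) unfolding vecs_def by auto
  have scal: "\<And>x a. x \<in> C \<Longrightarrow> map ((*) a) x \<in> C" using assms(7) unfolding scalable_def by auto
  define \<beta>2 where "\<beta>2 = \<beta>[0 := \<beta> ! 0 + \<alpha> * \<beta> ! 1]"
  define \<beta>3 where "\<beta>3 = \<beta>[0 := \<beta> ! 0 + \<gamma> * \<beta> ! 1]"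
  have db1: "dual_basis q m B1 = \<beta>" by (rule F.dual_basis_eq[OF assms(14) assms(17)])
  have db2: "dual_basis q m B2 = \<beta>2" unfolding \<beta>2_def by (rule F.dual_basis_eq[OF assms(15) assms(18)])
  have db3: "dual_basis q m B3 = \<beta>3" unfolding \<beta>3_def by (rule F.dual_basis_eq[OF assms(16) assms(19)])
  have len\<beta>: "length \<beta> = m" using assms(17) unfolding is_dual_basis_def is_basis_def by simp
  have ind\<beta>: "\<And>c. (\<forall>i<m. c i \<in> GFq q) \<Longrightarrow> (\<Sum>i<m. c i * \<beta> ! i) = 0 \<Longrightarrow> \<forall>i<m. c i = 0"
    using assms(17) unfolding is_dual_basis_def is_basis_def by blast
  have hyp: "(\<Sum>i<m. GG q m f x y (L ! i) (L ! i)) = 0"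
    if "dual_basis q m B = L" "length L = m" "self_orthogonal (Im q m B C) (induced_form m n f)"
       "x \<in> C" "y \<in> C" for L B x y
  proof -
    have "imv q m L x \<in> Im q m B C" "imv q m L y \<in> Im q m B C" using that by (auto simp: Im_eq)
    hence "induced_form m n f (imv q m L x) (imv q m L y) = 0"
      using that(3) unfolding self_orthogonal_def by blast
    thus ?thesis using induced_imv[OF that(2) lenx[OF that(4)] lenx[OF that(5)]] by simp
  qed
  have hyps: "(\<Sum>i<m. GG q m f x y (L ! i * a) (L ! i * b)) = 0"
    if "dual_basis q m B = L" "length L = m" "self_orthogonal (Im q m B C) (induced_form m n f)"
       "x \<in> C" "y \<in> C" for L B x y a b
    using hyp[OF that(1,2,3) scal[OF that(4), of a] scal[OF that(5), of b]] by (simp add: GG_scale)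
  obtain m' where m': "m = Suc m'" using m1 by (cases m) auto
  have \<beta>0: "\<beta> ! 0 \<noteq> 0"
  proof
    assume z: "\<beta> ! 0 = 0"
    define c :: "nat \<Rightarrow> 'a" where "c = (\<lambda>i. if i = 0 then 1 else 0)"
    have "(\<Sum>i<m. c i * \<beta> ! i) = 0" unfolding m' sum.lessThan_Suc_shift c_def using z by simp
    moreover have "\<forall>i<m. c i \<in> GFq q" unfolding c_def using qpos by auto
    ultimately have "c 0 = 0" using ind\<beta> m1 by auto
    thus False unfolding c_def by simp
  qed
  define s where "s = \<beta> ! 1 / \<beta> ! 0"
  have sG: "s \<notin> GFq q"
  proof
    assume sg: "s \<in> GFq q"
    obtain m'' where m'': "m = Suc (Suc m'')" using assms(3) by (cases m; cases "m - 1") auto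
    define c :: "nat \<Rightarrow> 'a" where "c = (\<lambda>i. if i = 0 then s else if i = 1 then -1 else 0)"
    have "(\<Sum>i<m. c i * \<beta> ! i) = s * \<beta> ! 0 - \<beta> ! 1"
      unfolding m'' sum.lessThan_Suc_shift c_def by simp
    also have "\<dots> = 0" unfolding s_def using \<beta>0 by simp
    finally have "(\<Sum>i<m. c i * \<beta> ! i) = 0" .
    moreover have "\<forall>i<m. c i \<in> GFq q" unfolding c_def using qpos sg GFq_neg[OF k(2), of 1] by auto
    ultimately have "c 1 = 0" using ind\<beta> m'' by auto
    thus False unfolding c_def by simp
  qed
  have \<beta>2_0: "\<beta>2 ! 0 = \<beta> ! 0 + \<alpha> * \<beta> ! 1" unfolding \<beta>2_def using len\<beta> m1 by simp
  have \<beta>3_0: "\<beta>3 ! 0 = \<beta> ! 0 + \<gamma> * \<beta> ! 1" unfolding \<beta>3_def using len\<beta> m1 by simp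
  have \<beta>2_S: "\<beta>2 ! Suc i = \<beta> ! Suc i" for i unfolding \<beta>2_def by simp
  have \<beta>3_S: "\<beta>3 ! Suc i = \<beta> ! Suc i" for i unfolding \<beta>3_def by simp
  have len2: "length \<beta>2 = m" "length \<beta>3 = m" unfolding \<beta>2_def \<beta>3_def using len\<beta> by auto
  have G0: "GG q m f x y u v = 0" if x: "x \<in> C" and y: "y \<in> C" for x y u v
  proof -
    define G where "G = GG q m f x y"
    have vx: "map h x \<in> vecs UNIV n" for h :: "'a \<Rightarrow> 'a" using lenx[OF x] unfolding vecs_def by simp
    have vy: "map h y \<in> vecs UNIV n" for h :: "'a \<Rightarrow> 'a" using lenx[OF y] unfolding vecs_def by simp
    have add1: "G (u1 + u2) w = G u1 w + G u2 w" for u1 u2 w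
    proof -
      have "map (\<lambda>xi. Tr q m ((u1 + u2) * xi)) x = vadd (map (\<lambda>xi. Tr q m (u1 * xi)) x) (map (\<lambda>xi. Tr q m (u2 * xi)) x)"
        by (simp add: vadd_map distrib_right Tr_add[OF k(2)])
      thus ?thesis unfolding G_def GG_def using assms(8) vx vy unfolding biadditive_def by simp
    qed
    have add2: "G w (u1 + u2) = G w u1 + G w u2" for u1 u2 w
    proof -
      have "map (\<lambda>xi. Tr q m ((u1 + u2) * xi)) y = vadd (map (\<lambda>xi. Tr q m (u1 * xi)) y) (map (\<lambda>xi. Tr q m (u2 * xi)) y)"
        by (simp add: vadd_map distrib_right Tr_add[OF k(2)])
      thus ?thesis unfolding G_def GG_def using assms(8) vx vy unfolding biadditive_def by simp
    qed
    have S1: "(\<Sum>i<m. G (\<beta> ! i * a) (\<beta> ! i * b)) = 0" for a b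
      unfolding G_def by (rule hyps[OF db1 len\<beta> assms(20) x y])
    have S2: "(\<Sum>i<m. G (\<beta>2 ! i * a) (\<beta>2 ! i * b)) = 0" for a b
      unfolding G_def by (rule hyps[OF db2 len2(1) assms(21) x y])
    have S3: "(\<Sum>i<m. G (\<beta>3 ! i * a) (\<beta>3 ! i * b)) = 0" for a b
      unfolding G_def by (rule hyps[OF db3 len2(2) assms(22) x y])
    have inv1: "G ((1 + \<alpha> * s) * u) ((1 + \<alpha> * s) * v) = G u v" for u v
    proof -
      define a where "a = u / \<beta> ! 0"
      define b where "b = v / \<beta> ! 0"
      have "G (\<beta>2 ! 0 * a) (\<beta>2 ! 0 * b) + (\<Sum>i<m'. G (\<beta> ! Suc i * a) (\<beta> ! Suc i * b)) = 0"
        using S2[of a b] unfolding m' sum.lessThan_Suc_shift by (simp add: \<beta>2_S)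
      moreover have "G (\<beta> ! 0 * a) (\<beta> ! 0 * b) + (\<Sum>i<m'. G (\<beta> ! Suc i * a) (\<beta> ! Suc i * b)) = 0"
        using S1[of a b] unfolding m' sum.lessThan_Suc_shift by simp
      ultimately have "G (\<beta>2 ! 0 * a) (\<beta>2 ! 0 * b) = G (\<beta> ! 0 * a) (\<beta> ! 0 * b)"
        by (metis add_right_cancel)
      moreover have "\<beta>2 ! 0 * a = (1 + \<alpha> * s) * u" "\<beta>2 ! 0 * b = (1 + \<alpha> * s) * v"
        unfolding \<beta>2_0 a_def b_def s_def using \<beta>0 by (simp_all add: field_simps)
      moreover have "\<beta> ! 0 * a = u" "\<beta> ! 0 * b = v" unfolding a_def b_def using \<beta>0 by simp_all
      ultimately show ?thesis by simp
    qed
    have inv2: "G ((1 + \<gamma> * s) * u) ((1 + \<gamma> * s) * v) = G u v" for u v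
    proof -
      define a where "a = u / \<beta> ! 0"
      define b where "b = v / \<beta> ! 0"
      have "G (\<beta>3 ! 0 * a) (\<beta>3 ! 0 * b) + (\<Sum>i<m'. G (\<beta> ! Suc i * a) (\<beta> ! Suc i * b)) = 0"
        using S3[of a b] unfolding m' sum.lessThan_Suc_shift by (simp add: \<beta>3_S)
      moreover have "G (\<beta> ! 0 * a) (\<beta> ! 0 * b) + (\<Sum>i<m'. G (\<beta> ! Suc i * a) (\<beta> ! Suc i * b)) = 0"
        using S1[of a b] unfolding m' sum.lessThan_Suc_shift by simp
      ultimately have "G (\<beta>3 ! 0 * a) (\<beta>3 ! 0 * b) = G (\<beta> ! 0 * a) (\<beta> ! 0 * b)"
        by (metis add_right_cancel)
      moreover have "\<beta>3 ! 0 * a = (1 + \<gamma> * s) * u" "\<beta>3 ! 0 * b = (1 + \<gamma> * s) * v"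
        unfolding \<beta>3_0 a_def b_def s_def using \<beta>0 by (simp_all add: field_simps)
      moreover have "\<beta> ! 0 * a = u" "\<beta> ! 0 * b = v" unfolding a_def b_def using \<beta>0 by simp_all
      ultimately show ?thesis by simp
    qed
    have "G u v = 0"
      by (rule P.core[OF add1 add2 k(2) assms(9) assms(11) assms(10) assms(12) assms(13) sG inv1 inv2])
    thus ?thesis unfolding G_def .
  qed
  show ?thesis
  proof
    show "self_orthogonal (TrC q m C) f"
      unfolding self_orthogonal_def TrC_def
    proof (intro ballI)
      fix x' y' assume "x' \<in> (\<lambda>x. map (Tr q m) x) ` C" "y' \<in> (\<lambda>x. map (Tr q m) x) ` C"
      then obtain x y where xy: "x \<in> C" "y \<in> C" "x' = map (Tr q m) x" "y' = map (Tr q m) y" by blast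
      have "f x' y' = GG q m f x y 1 1" unfolding xy GG_def by simp
      thus "f x' y' = 0" using G0[OF xy(1,2)] by simp
    qed
  next
    show "\<forall>B. is_basis q m B \<longrightarrow> self_orthogonal (Im q m B C) (induced_form m n f)"
    proof (intro allI impI)
      fix B :: "'a list" assume B: "is_basis q m B"
      define L where "L = dual_basis q m B"
      have lenL: "length L = m" using F.dual_basis_prop[OF B] unfolding L_def is_dual_basis_def is_basis_def by simp
      show "self_orthogonal (Im q m B C) (induced_form m n f)"
        unfolding self_orthogonal_def
      proof (intro ballI)
        fix x' y' assume "x' \<in> Im q m B C" "y' \<in> Im q m B C"
        then obtain x y where xy: "x \<in> C" "y \<in> C" "x' = imv q m L x" "y' = imv q m L y"
          unfolding Im_eq L_def by blast
        show "induced_form m n f x' y' = 0"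
          unfolding xy induced_imv[OF lenL lenx[OF xy(1)] lenx[OF xy(2)]] using G0[OF xy(1,2)] by simp
      qed
    qed
  qed
qed

end
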